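(* Let $p\ge5$. For every assignment $\alpha$ on the white metallic tree, $\mathcal W_\alpha$ possesses the preferred son property: for every node $\nu$, exactly one son of $\nu$ in $\mathcal W_\alpha$ has metallic code ending with $0$, and the metallic code of that son is the metallic code of $\nu$ followed by $0$ (this son is called the preferred son of $\nu$). Moreover, for every $n\ge0$, $m_{n+1}$ is the preferred son of $m_n$ in $\mathcal W_\alpha$.
   Context: Fix $p\ge5$. Metallic numbers: $m_{-1}=0$, $m_0=1$, $m_{n+2}=(p-2)m_{n+1}-m_n$. With $d=p-3$, $c=p-4$, the metallic code of a positive integer $n$ is the unique word $a_k\cdots a_0$ over $\{0,\dots,p-3\}$ with $a_k\ne0$, $n=\sum a_im_i$, containing no factor $d\,c^j\,d$ ($j\ge0$). White metallic tree under an assignment $\alpha$, $\mathcal W_\alpha$: nodes are the positive integers, each black or white; root $1$ is white; nodes are processed in increasing order and node $\nu$ receives $p-2$ sons if white and $p-3$ sons if black, namely the smallest integers not yet used, in increasing order; an assignment specifies, for each node, the position (leftmost = $1$) of its unique black son among its sons (possibly depending on the node), other sons being white. *)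

theory Defs
  imports Main
begin

text \<open>For p \<ge> 5 the sequence is increasing,
  so natural-number subtraction never truncates.\<close>
fun metal :: "nat \<Rightarrow> nat \<Rightarrow> nat" where
  "metal p 0 = 1"
| "metal p (Suc 0) = p - 2"
| "metal p (Suc (Suc n)) = (p - 2) * metal p (Suc n) - metal p n"

text \<open>Words are stored little-endian: the list [a_0, a_1, ..., a_k] represents a_k...a_0.\<close>
definition word_val :: "nat \<Rightarrow> nat list \<Rightarrow> nat" where
  "word_val p w = (\<Sum>i<length w. w ! i * metal p i)"

text \<open>Forbidden factor d c^j d with d = p-3, c = p-4 (a palindrome, so orientation irrelevant).\<close>
definition has_forbidden :: "nat \<Rightarrow> nat list \<Rightarrow> bool" where
  "has_forbidden p w = (\<exists>u v j. w = u @ [p - 3] @ replicate j (p - 4) @ [p - 3] @ v)"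

definition valid_code :: "nat \<Rightarrow> nat list \<Rightarrow> bool" where
  "valid_code p w = (w \<noteq> [] \<and> last w \<noteq> 0 \<and> (\<forall>a\<in>set w. a \<le> p - 3) \<and> \<not> has_forbidden p w)"

definition metal_code :: "nat \<Rightarrow> nat \<Rightarrow> nat list" where
  "metal_code p n = (THE w. valid_code p w \<and> word_val p w = n)"

text \<open>Construction of the tree W_alpha. build p \<alpha> k = (colour map, next unused integer)
  after processing nodes 1..k. Colour True = white. Nodes not yet assigned a colour
  default to white (only the root 1 is unassigned by construction, and it is white).
  \<alpha> \<nu> is the position (leftmost = 1) of the black son of \<nu>.\<close>
fun build :: "nat \<Rightarrow> (nat \<Rightarrow> nat) \<Rightarrow> nat \<Rightarrow> (nat \<Rightarrow> bool) \<times> nat" where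
  "build p \<alpha> 0 = ((\<lambda>x. True), 2)"
| "build p \<alpha> (Suc k) =
     (let (col, nx) = build p \<alpha> k;
          dg = (if col (Suc k) then p - 2 else p - 3)
      in ((\<lambda>x. if nx \<le> x \<and> x < nx + dg then x - nx + 1 \<noteq> \<alpha> (Suc k) else col x), nx + dg))"

definition white :: "nat \<Rightarrow> (nat \<Rightarrow> nat) \<Rightarrow> nat \<Rightarrow> bool" where
  "white p \<alpha> x = fst (build p \<alpha> x) x"

definition sons :: "nat \<Rightarrow> (nat \<Rightarrow> nat) \<Rightarrow> nat \<Rightarrow> nat set" where
  "sons p \<alpha> \<nu> = {snd (build p \<alpha> (\<nu> - 1)) ..< snd (build p \<alpha> \<nu>)}"

definition assignment :: "nat \<Rightarrow> (nat \<Rightarrow> nat) \<Rightarrow> bool" where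
  "assignment p \<alpha> = (\<forall>\<nu>\<ge>1. 1 \<le> \<alpha> \<nu> \<and> \<alpha> \<nu> \<le> card (sons p \<alpha> \<nu>))"

end

theory Submission
  imports Defs
begin


lemma metal_mono_step: assumes "p \<ge> 5" shows "metal p n < metal p (Suc n)"
proof (induction n)
  case 0 then show ?case using assms by simp
next
  case (Suc n)
  have "3 * metal p (Suc n) \<le> (p-2) * metal p (Suc n)" using assms by (intro mult_le_mono1) simp
  then show ?case using Suc by (simp only: metal.simps)
qed

lemma metal_SS: assumes "p \<ge> 5" shows "metal p (Suc (Suc n)) + metal p n = (p-2) * metal p (Suc n)"
proof -
  have "3 * metal p (Suc n) \<le> (p-2) * metal p (Suc n)" using assms by (intro mult_le_mono1) simp
  then show ?thesis using metal_mono_step[OF assms, of n] by (simp only: metal.simps)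
qed



definition ok :: "nat \<Rightarrow> nat list \<Rightarrow> bool" where
  "ok p w = ((\<forall>a\<in>set w. a \<le> p - 3) \<and> \<not> has_forbidden p w)"
definition topcrit :: "nat \<Rightarrow> nat list \<Rightarrow> bool" where
  "topcrit p w = (\<exists>u j. w = u @ [p-3] @ replicate j (p-4))"
definition lowcrit :: "nat \<Rightarrow> nat list \<Rightarrow> bool" where
  "lowcrit p w = (\<exists>u j. w = replicate j (p-4) @ [p-3] @ u)"
definition mm1 :: "nat \<Rightarrow> nat \<Rightarrow> nat" where
  "mm1 p k = (case k of 0 \<Rightarrow> 0 | Suc j \<Rightarrow> metal p j)"
definition uu :: "nat \<Rightarrow> nat \<Rightarrow> nat" where
  "uu p k = metal p k - mm1 p k"

lemma val_snoc: "word_val p (w @ [a]) = word_val p w + a * metal p (length w)"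
  unfolding word_val_def by (simp add: nth_append)

lemma val_Nil[simp]: "word_val p [] = 0" unfolding word_val_def by simp

lemma val_cons: "word_val p (b # w) = b + word_val p (0 # w)"
  unfolding word_val_def by (simp add: sum.lessThan_Suc_shift del: sum.lessThan_Suc)

lemma forb_snoc: "has_forbidden p (w @ [a]) \<longleftrightarrow> has_forbidden p w \<or> (a = p-3 \<and> topcrit p w)"
proof
  assume "has_forbidden p (w @ [a])"
  then obtain u v j where e: "w @ [a] = u @ [p - 3] @ replicate j (p - 4) @ [p - 3] @ v"
    unfolding has_forbidden_def by blast
  show "has_forbidden p w \<or> (a = p-3 \<and> topcrit p w)"
  proof (cases v rule: rev_cases)
    case Nil
    then have "w @ [a] = (u @ [p - 3] @ replicate j (p - 4)) @ [p - 3]" using e by simp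
    then show ?thesis unfolding topcrit_def by blast
  next
    case (snoc v' x)
    then have "w @ [a] = (u @ [p - 3] @ replicate j (p - 4) @ [p - 3] @ v') @ [x]" using e by simp
    then have "w = u @ [p - 3] @ replicate j (p - 4) @ [p - 3] @ v'" by simp
    then show ?thesis unfolding has_forbidden_def by blast
  qed
next
  assume "has_forbidden p w \<or> (a = p-3 \<and> topcrit p w)"
  then show "has_forbidden p (w @ [a])"
  proof
    assume "has_forbidden p w"
    then obtain u v j where e: "w = u @ [p - 3] @ replicate j (p - 4) @ [p - 3] @ v"
      unfolding has_forbidden_def by blast
    then have "w @ [a] = u @ [p - 3] @ replicate j (p - 4) @ [p - 3] @ (v @ [a])" by simp
    then show ?thesis unfolding has_forbidden_def by blast
  next
    assume "a = p-3 \<and> topcrit p w"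
    then obtain u j where "a = p-3" "w = u @ [p-3] @ replicate j (p-4)" unfolding topcrit_def by blast
    then have "w @ [a] = u @ [p - 3] @ replicate j (p - 4) @ [p - 3] @ []" by simp
    then show ?thesis unfolding has_forbidden_def by blast
  qed
qed

lemma topcrit_snoc: assumes "p \<ge> 5"
  shows "topcrit p (w @ [a]) \<longleftrightarrow> a = p-3 \<or> (a = p-4 \<and> topcrit p w)"
proof
  assume "topcrit p (w @ [a])"
  then obtain u j where e: "w @ [a] = u @ [p-3] @ replicate j (p-4)" unfolding topcrit_def by blast
  show "a = p-3 \<or> (a = p-4 \<and> topcrit p w)"
  proof (cases j)
    case 0 then show ?thesis using e by simp
  next
    case (Suc i)
    then have "w @ [a] = (u @ [p-3] @ replicate i (p-4)) @ [p-4]" using e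
      by (simp add: replicate_append_same[symmetric])
    then show ?thesis unfolding topcrit_def by blast
  qed
next
  assume "a = p-3 \<or> (a = p-4 \<and> topcrit p w)"
  then show "topcrit p (w @ [a])"
  proof
    assume "a = p-3"
    then have "w @ [a] = w @ [p-3] @ replicate 0 (p-4)" by simp
    then show ?thesis unfolding topcrit_def by blast
  next
    assume "a = p-4 \<and> topcrit p w"
    then obtain u j where "a = p-4" "w = u @ [p-3] @ replicate j (p-4)" unfolding topcrit_def by blast
    then have "w @ [a] = u @ [p-3] @ replicate (Suc j) (p-4)"
      by (simp add: replicate_append_same[symmetric])
    then show ?thesis unfolding topcrit_def by blast
  qed
qed

lemma forb_rev: "has_forbidden p (rev w) = has_forbidden p w"
proof -
  have *: "has_forbidden p (rev w)" if "has_forbidden p w" for w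
  proof -
    from that obtain u v j where e: "w = u @ [p - 3] @ replicate j (p - 4) @ [p - 3] @ v"
      unfolding has_forbidden_def by blast
    then have "rev w = rev v @ [p - 3] @ replicate j (p - 4) @ [p - 3] @ rev u" by simp
    then show ?thesis unfolding has_forbidden_def by blast
  qed
  show ?thesis using *[of w] *[of "rev w"] by auto
qed

lemma lowcrit_rev: "lowcrit p w = topcrit p (rev w)"
proof
  assume "lowcrit p w"
  then obtain u j where "w = replicate j (p-4) @ [p-3] @ u" unfolding lowcrit_def by blast
  then have "rev w = rev u @ [p-3] @ replicate j (p-4)" by simp
  then show "topcrit p (rev w)" unfolding topcrit_def by blast
next
  assume "topcrit p (rev w)"
  then obtain u j where "rev w = u @ [p-3] @ replicate j (p-4)" unfolding topcrit_def by blast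
  then have "w = rev (u @ [p-3] @ replicate j (p-4))" by (metis rev_rev_ident)
  then have "w = replicate j (p-4) @ [p-3] @ rev u" by simp
  then show "lowcrit p w" unfolding lowcrit_def by blast
qed

lemma forb_cons: "has_forbidden p (a # w) \<longleftrightarrow> has_forbidden p w \<or> (a = p-3 \<and> lowcrit p w)"
proof -
  have "has_forbidden p (a # w) = has_forbidden p (rev w @ [a])" using forb_rev[of p "a#w"] by simp
  then show ?thesis using forb_snoc[of p "rev w" a] forb_rev[of p w] lowcrit_rev[of p w] by simp
qed

lemma lowcrit_cons: assumes "p \<ge> 5"
  shows "lowcrit p (a # w) \<longleftrightarrow> a = p-3 \<or> (a = p-4 \<and> lowcrit p w)"
  using topcrit_snoc[OF assms, of "rev w" a] by (simp add: lowcrit_rev)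

lemma ok_snoc: "ok p (w @ [a]) \<longleftrightarrow> ok p w \<and> a \<le> p-3 \<and> \<not> (a = p-3 \<and> topcrit p w)"
  unfolding ok_def using forb_snoc[of p w a] by auto

lemma ok_cons: "ok p (a # w) \<longleftrightarrow> ok p w \<and> a \<le> p-3 \<and> \<not> (a = p-3 \<and> lowcrit p w)"
  unfolding ok_def using forb_cons[of p a w] by auto

lemma metal_pos: assumes "p \<ge> 5" shows "metal p k > 0"
proof (induction k)
  case 0 then show ?case by simp
next
  case (Suc k) then show ?case using metal_mono_step[OF assms, of k] by linarith
qed

lemma metal_strict: assumes "p \<ge> 5" "i < j" shows "metal p i < metal p j"
  using assms(2)
proof (induction j)
  case 0 then show ?case by simp
next
  case (Suc j)
  then show ?case using metal_mono_step[OF assms(1), of j] by (cases "i = j") auto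
qed

lemma mm1_le: "p \<ge> 5 \<Longrightarrow> mm1 p k \<le> metal p k"
  unfolding mm1_def using metal_mono_step by (cases k) (auto intro: less_imp_le)

lemma rec_V: assumes "p \<ge> 5" shows "metal p (Suc k) = (p-3) * metal p k + uu p k"
proof (cases k)
  case 0 then show ?thesis using assms by (simp add: uu_def mm1_def)
next
  case (Suc j)
  have pp: "p - 2 = Suc (p-3)" using assms by arith
  have e: "(p-2) * x = (p-3) * x + x" for x :: nat unfolding pp by simp
  have "metal p j \<le> metal p (Suc j)" using metal_mono_step[OF assms, of j] by simp
  then show ?thesis using Suc metal_SS[OF assms, of j] e[of "metal p (Suc j)"]
    by (simp add: uu_def mm1_def)
qed

lemma rec_U: assumes "p \<ge> 5" shows "uu p (Suc k) = (p-4) * metal p k + uu p k"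
proof -
  have pp: "p - 3 = Suc (p-4)" using assms by arith
  have e: "(p-3) * x = (p-4) * x + x" for x :: nat unfolding pp by simp
  have "uu p (Suc k) = metal p (Suc k) - metal p k" by (simp add: uu_def mm1_def)
  also have "\<dots> = (p-3) * metal p k + uu p k - metal p k" using rec_V[OF assms] by simp
  finally show ?thesis using e[of "metal p k"] by simp
qed



lemma uu_pos: assumes "p \<ge> 5" shows "uu p k > 0"
  using metal_mono_step[OF assms] unfolding uu_def mm1_def by (cases k) auto

lemma bounds: assumes p: "p \<ge> 5" and "ok p w"
  shows "word_val p w < metal p (length w) \<and> (\<not> topcrit p w \<longrightarrow> word_val p w < uu p (length w))"
  using assms(2)
proof (induction w rule: rev_induct)
  case Nil then show ?case by (simp add: uu_def mm1_def)
next
  case (snoc a w)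
  define k where "k = length w"
  define M where "M = metal p k"
  have okw: "ok p w" and a: "a \<le> p-3" and nt: "\<not> (a = p-3 \<and> topcrit p w)"
    using snoc.prems ok_snoc by auto
  have IH1: "word_val p w < M" and IH2: "\<not> topcrit p w \<Longrightarrow> word_val p w < uu p k"
    using snoc.IH[OF okw] by (auto simp: M_def k_def)
  have v: "word_val p (w @ [a]) = word_val p w + a * M" by (simp add: val_snoc M_def k_def)
  have rV: "metal p (length (w@[a])) = (p-3) * M + uu p k" using rec_V[OF p] by (simp add: M_def k_def)
  have rU: "uu p (length (w@[a])) = (p-4) * M + uu p k" using rec_U[OF p] by (simp add: M_def k_def)
  have lt: "word_val p w + a * M < b * M" if "a < b" for b
  proof -
    have "(a+1) * M \<le> b * M" using that by (intro mult_le_mono1) simp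
    then show ?thesis using IH1 by simp
  qed
  have c1: "word_val p (w @ [a]) < metal p (length (w@[a]))"
  proof (cases "a = p-3")
    case True then show ?thesis using IH2 nt v rV by simp
  next
    case False then have "a < p-3" using a by simp
    from lt[OF this] show ?thesis using v rV by simp
  qed
  have c2: "word_val p (w @ [a]) < uu p (length (w@[a]))" if "\<not> topcrit p (w @ [a])"
  proof -
    have na: "a \<noteq> p-3" and nb: "a = p-4 \<Longrightarrow> \<not> topcrit p w" using that topcrit_snoc[OF p] by auto
    show ?thesis
    proof (cases "a = p-4")
      case True then show ?thesis using IH2 nb v rU by simp
    next
      case False then have "a < p-4" using a na by simp
      from lt[OF this] show ?thesis using v rU by simp
    qed
  qed
  show ?case using c1 c2 by blast
qed

lemma existence: assumes p: "p \<ge> 5"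
  shows "(\<forall>n < metal p k. \<exists>w. length w = k \<and> ok p w \<and> word_val p w = n) \<and>
         (\<forall>n < uu p k. \<exists>w. length w = k \<and> ok p w \<and> \<not> topcrit p w \<and> word_val p w = n)"
proof (induction k)
  case 0
  have "ok p []" unfolding ok_def has_forbidden_def by simp
  moreover have "\<not> topcrit p []" unfolding topcrit_def by simp
  ultimately show ?case by (auto simp: uu_def mm1_def)
next
  case (Suc k)
  define M where "M = metal p k"
  have Mpos: "M > 0" using metal_pos[OF p] by (simp add: M_def)
  have IH1: "\<And>n. n < M \<Longrightarrow> \<exists>w. length w = k \<and> ok p w \<and> word_val p w = n"
   and IH2: "\<And>n. n < uu p k \<Longrightarrow> \<exists>w. length w = k \<and> ok p w \<and> \<not> topcrit p w \<and> word_val p w = n"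
    using Suc by (auto simp: M_def)
  have small: "\<exists>w. length w = Suc k \<and> ok p w \<and> (a0 \<le> p - 4 \<longrightarrow> \<not> topcrit p w) \<and> word_val p w = n"
    if "n < a0 * M" "a0 \<le> p - 3" for n a0
  proof -
    define a where "a = n div M"
    have "a < a0" using that Mpos unfolding a_def by (simp add: div_less_iff_less_mult)
    obtain w where w: "length w = k" "ok p w" "word_val p w = n mod M"
      using IH1[of "n mod M"] Mpos by auto
    have "a \<noteq> p-3" "a0 \<le> p-4 \<Longrightarrow> a \<noteq> p-4" "a \<le> p-3" using \<open>a < a0\<close> that p by auto
    then have "ok p (w @ [a])" "a0 \<le> p-4 \<longrightarrow> \<not> topcrit p (w @ [a])" using w ok_snoc topcrit_snoc[OF p] by auto
    moreover have "word_val p (w @ [a]) = n" using w by (simp add: val_snoc M_def[symmetric] a_def)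
    ultimately show ?thesis using w by (intro exI[of _ "w @ [a]"]) simp
  qed
  have big: "\<exists>w. length w = Suc k \<and> ok p w \<and> (a = p-4 \<longrightarrow> \<not> topcrit p w) \<and> word_val p w = n"
    if "a * M \<le> n" "n < a * M + uu p k" "a = p-3 \<or> a = p-4" for n a
  proof -
    have "n - a * M < uu p k" using that by linarith
    then obtain w where w: "length w = k" "ok p w" "\<not> topcrit p w" "word_val p w = n - a * M"
      using IH2[of "n - a * M"] by auto
    have "ok p (w @ [a])" using w that ok_snoc by auto
    moreover have "a = p-4 \<longrightarrow> \<not> topcrit p (w @ [a])" using w that topcrit_snoc[OF p] p by auto
    moreover have "word_val p (w @ [a]) = n" using w that by (simp add: val_snoc M_def[symmetric])
    ultimately show ?thesis using w by (intro exI[of _ "w @ [a]"]) simp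
  qed
  have A: "\<exists>w. length w = Suc k \<and> ok p w \<and> word_val p w = n" if "n < metal p (Suc k)" for n
  proof (cases "n < (p-3) * M")
    case True then show ?thesis using small[of n "p-3"] by blast
  next
    case False then show ?thesis using big[of "p-3" n] that rec_V[OF p, of k] M_def by auto
  qed
  have B: "\<exists>w. length w = Suc k \<and> ok p w \<and> \<not> topcrit p w \<and> word_val p w = n" if "n < uu p (Suc k)" for n
  proof (cases "n < (p-4) * M")
    case True then show ?thesis using small[of n "p-4"] p by auto
  next
    case False then show ?thesis using big[of "p-4" n] that rec_U[OF p, of k] M_def by auto
  qed
  show ?case using A B by blast
qed



lemma ok_prefix: "ok p (w @ v) \<Longrightarrow> ok p w"
  by (induction v rule: rev_induct) (auto simp: ok_snoc simp flip: append_assoc)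

lemma unique_ok: assumes p: "p \<ge> 5"
  shows "ok p w \<Longrightarrow> ok p w' \<Longrightarrow> length w = length w' \<Longrightarrow> word_val p w = word_val p w' \<Longrightarrow> w = w'"
proof (induction w arbitrary: w' rule: rev_induct)
  case Nil then show ?case by simp
next
  case (snoc a w)
  obtain v b where w': "w' = v @ [b]" using snoc.prems(3) by (cases w' rule: rev_cases) auto
  have len: "length v = length w" using snoc.prems(3) w' by simp
  define M where "M = metal p (length w)"
  have okw: "ok p w" "ok p v" using snoc.prems ok_prefix w' by blast+
  have bw: "word_val p w < M" "word_val p v < M" using bounds[OF p okw(1)] bounds[OF p okw(2)] len M_def by auto
  have e: "word_val p w + a * M = word_val p v + b * M" using snoc.prems(4) w' len by (simp add: val_snoc M_def)
  have "a = b"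
  proof (rule ccontr)
    assume "a \<noteq> b"
    then consider "a < b" | "b < a" by linarith
    then show False
    proof cases
      case 1 then have "(a+1) * M \<le> b * M" by (intro mult_le_mono1) simp
      then show False using e bw by simp
    next
      case 2 then have "(b+1) * M \<le> a * M" by (intro mult_le_mono1) simp
      then show False using e bw by simp
    qed
  qed
  then have "word_val p w = word_val p v" using e by simp
  then have "w = v" using snoc.IH[OF okw(1) okw(2)] len by simp
  then show ?case using w' \<open>a = b\<close> by simp
qed

lemma lex: assumes p: "p \<ge> 5"
  shows "ok p (b # u) \<Longrightarrow> ok p (b' # u') \<Longrightarrow> length u = length u' \<Longrightarrow> word_val p u < word_val p u'
    \<Longrightarrow> word_val p (b # u) < word_val p (b' # u')"
proof (induction u arbitrary: u' rule: rev_induct)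
  case Nil then show ?case by simp
next
  case (snoc a w)
  obtain v c where u': "u' = v @ [c]" using snoc.prems(3) by (cases u' rule: rev_cases) auto
  have len: "length v = length w" using snoc.prems(3) u' by simp
  define M where "M = metal p (length w)"
  define M1 where "M1 = metal p (Suc (length w))"
  have ok1: "ok p (b # w)" "ok p (b' # v)" using snoc.prems(1,2) ok_prefix[of p "b # w" "[a]"] ok_prefix[of p "b' # v" "[c]"] u' by auto
  have okw: "ok p w" "ok p v" using ok1 ok_cons by auto
  have bw: "word_val p w < M" "word_val p v < M" using bounds[OF p okw(1)] bounds[OF p okw(2)] len M_def by auto
  have bw1: "word_val p (b # w) < M1" using bounds[OF p ok1(1)] M1_def by auto
  have e: "word_val p w + a * M < word_val p v + c * M" using snoc.prems(4) u' len by (simp add: val_snoc M_def)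
  have v1: "word_val p (b # w @ [a]) = word_val p (b # w) + a * M1"
    using val_snoc[of p "b # w" a] M1_def by simp
  have v2: "word_val p (b' # u') = word_val p (b' # v) + c * M1"
    using val_snoc[of p "b' # v" c] M1_def u' len by simp
  have "a \<le> c"
  proof (rule ccontr)
    assume "\<not> a \<le> c"
    then have "(c+1) * M \<le> a * M" by (intro mult_le_mono1) simp
    then show False using e bw by simp
  qed
  then consider "a < c" | "a = c" by linarith
  then show ?case
  proof cases
    case 1 then have "(a+1) * M1 \<le> c * M1" by (intro mult_le_mono1) simp
    then show ?thesis using v1 v2 bw1 by simp
  next
    case 2
    then have "word_val p w < word_val p v" using e by simp
    then have "word_val p (b # w) < word_val p (b' # v)" using snoc.IH[OF ok1 ] len by simp
    then show ?thesis using v1 v2 2 by simp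
  qed
qed

lemma valid_ok: "valid_code p w \<Longrightarrow> ok p w"
  unfolding valid_code_def ok_def by auto

lemma metal_le: assumes p: "p \<ge> 5" and "i \<le> j" shows "metal p i \<le> metal p j"
  using metal_strict[OF p, of i j] assms(2) by (cases "i = j") auto

lemma valid_range: assumes p: "p \<ge> 5" and v: "valid_code p w"
  shows "metal p (length w - 1) \<le> word_val p w \<and> word_val p w < metal p (length w)"
proof -
  obtain u a where w: "w = u @ [a]" using v unfolding valid_code_def by (cases w rule: rev_cases) auto
  have "a \<noteq> 0" using v w unfolding valid_code_def by simp
  then have "1 * metal p (length u) \<le> a * metal p (length u)" by (intro mult_le_mono1) simp
  then have "metal p (length u) \<le> word_val p w" using w val_snoc[of p u a] by (simp only: mult_1)
  then show ?thesis using bounds[OF p valid_ok[OF v]] w by simp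
qed

lemma valid_unique: assumes p: "p \<ge> 5" and v: "valid_code p w" "valid_code p w'"
  and e: "word_val p w = word_val p w'"
  shows "w = w'"
proof -
  have l: "length w = length w'"
  proof (rule ccontr)
    assume "length w \<noteq> length w'"
    then consider "length w < length w'" | "length w' < length w" by linarith
    then show False
    proof cases
      case 1
      then have "metal p (length w) \<le> metal p (length w' - 1)"
        using metal_le[OF p, of "length w" "length w' - 1"] 1 by simp
      then show False using valid_range[OF p v(1)] valid_range[OF p v(2)] e by simp
    next
      case 2
      then have "metal p (length w') \<le> metal p (length w - 1)"
        using metal_le[OF p, of "length w'" "length w - 1"] 2 by simp
      then show False using valid_range[OF p v(1)] valid_range[OF p v(2)] e by simp
    qed
  qed
  show ?thesis using unique_ok[OF p valid_ok[OF v(1)] valid_ok[OF v(2)] l e] .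
qed

lemma code_of_valid: assumes p: "p \<ge> 5" and v: "valid_code p w"
  shows "metal_code p (word_val p w) = w"
  unfolding metal_code_def
  by (rule the_equality) (use v valid_unique[OF p] in auto)

lemma metal_ge: "p \<ge> 5 \<Longrightarrow> k < metal p k"
proof (induction k)
  case 0 then show ?case by simp
next
  case (Suc k) then show ?case using metal_mono_step[of p k] by simp
qed

lemma strip: "ok p w \<Longrightarrow> word_val p w \<ge> 1 \<Longrightarrow> \<exists>w'. valid_code p w' \<and> word_val p w' = word_val p w"
proof (induction w rule: rev_induct)
  case Nil then show ?case by simp
next
  case (snoc a w)
  show ?case
  proof (cases "a = 0")
    case True
    then have "word_val p (w @ [a]) = word_val p w" by (simp add: val_snoc)
    then show ?thesis using snoc ok_prefix by metis
  next
    case False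
    then have "valid_code p (w @ [a])" using snoc.prems unfolding valid_code_def ok_def by auto
    then show ?thesis by blast
  qed
qed

lemma code_props: assumes p: "p \<ge> 5" and n: "n \<ge> 1"
  shows "valid_code p (metal_code p n) \<and> word_val p (metal_code p n) = n"
proof -
  obtain w where "length w = n" "ok p w" "word_val p w = n"
    using conjunct1[OF existence[OF p, of n]] metal_ge[OF p, of n] by blast
  then obtain w' where w': "valid_code p w'" "word_val p w' = n" using strip[of p w] n by auto
  then show ?thesis using code_of_valid[OF p w'(1)] by simp
qed



definition S :: "nat \<Rightarrow> nat \<Rightarrow> nat" where
  "S p n = (if n = 0 then 0 else word_val p (0 # metal_code p n))"
definition cr :: "nat \<Rightarrow> nat \<Rightarrow> nat" where
  "cr p n = (if n \<ge> 1 \<and> lowcrit p (metal_code p n) then 1 else 0)"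
definition T :: "nat \<Rightarrow> nat \<Rightarrow> nat" where
  "T p n = word_val p (tl (metal_code p n))"

lemma valid_cons: assumes "valid_code p w" "b \<le> p-3" "\<not> (b = p-3 \<and> lowcrit p w)"
  shows "valid_code p (b # w)"
  using assms forb_cons[of p b w] unfolding valid_code_def by auto

lemma valid_tl: assumes "valid_code p (b # w)" "w \<noteq> []"
  shows "valid_code p w \<and> b \<le> p-3 \<and> \<not> (b = p-3 \<and> lowcrit p w)"
  using assms forb_cons[of p b w] unfolding valid_code_def by auto

lemma cr_le: "cr p n \<le> 1" unfolding cr_def by simp

lemma digit_cond: assumes p: "p \<ge> 5" and n: "n \<ge> 1"
  shows "(b \<le> p-3 \<and> \<not> (b = p-3 \<and> lowcrit p (metal_code p n))) \<longleftrightarrow> b + cr p n < p - 2"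
  using p n unfolding cr_def by auto

lemma block_code: assumes p: "p \<ge> 5" and mu: "\<mu> \<ge> 1" and b: "b + cr p \<mu> < p - 2"
  shows "metal_code p (S p \<mu> + b) = b # metal_code p \<mu>"
proof -
  have v: "valid_code p (metal_code p \<mu>)" using code_props[OF p mu] by simp
  have "valid_code p (b # metal_code p \<mu>)" using valid_cons[OF v] digit_cond[OF p mu, of b] b by simp
  moreover have "word_val p (b # metal_code p \<mu>) = S p \<mu> + b" using mu val_cons[of p b] by (simp add: S_def)
  ultimately show ?thesis using code_of_valid[OF p] by metis
qed

lemma S_ge: assumes p: "p \<ge> 5" and mu: "\<mu> \<ge> 1" shows "S p \<mu> \<ge> p - 2"
proof -
  have "valid_code p (0 # metal_code p \<mu>)"
    using valid_cons[of p "metal_code p \<mu>" 0] code_props[OF p mu] p by simp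
  then have "metal p (length (0 # metal_code p \<mu>) - 1) \<le> S p \<mu>" using valid_range[OF p, of "0 # metal_code p \<mu>"] mu by (simp add: S_def)
  moreover have "length (metal_code p \<mu>) \<ge> 1" using code_props[OF p mu] unfolding valid_code_def by (cases "metal_code p \<mu>") auto
  ultimately have "metal p 1 \<le> S p \<mu>" using metal_le[OF p, of 1 "length (metal_code p \<mu>)"] by simp
  then show ?thesis by simp
qed

lemma code_small: assumes p: "p \<ge> 5" and "1 \<le> n" "n < p - 2" shows "metal_code p n = [n]"
proof -
  have "valid_code p [n]" using assms unfolding valid_code_def has_forbidden_def by auto
  moreover have "word_val p [n] = n" unfolding word_val_def by simp
  ultimately show ?thesis using code_of_valid[OF p] by metis
qed

lemma decomp: assumes p: "p \<ge> 5" and n: "n \<ge> 1"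
  shows "(n < p - 2 \<and> metal_code p n = [n]) \<or>
         (\<exists>\<mu> b. \<mu> \<ge> 1 \<and> b + cr p \<mu> < p - 2 \<and> n = S p \<mu> + b \<and> metal_code p n = b # metal_code p \<mu>)"
proof -
  have cp: "valid_code p (metal_code p n)" "word_val p (metal_code p n) = n" using code_props[OF p n] by auto
  then obtain b w where bw: "metal_code p n = b # w" unfolding valid_code_def by (cases "metal_code p n") auto
  show ?thesis
  proof (cases "w = []")
    case True
    then have "n = b" using cp bw unfolding word_val_def by simp
    moreover have "b \<le> p - 3" using cp bw unfolding valid_code_def by auto
    ultimately show ?thesis using bw True p by auto
  next
    case False
    have vt: "valid_code p w \<and> b \<le> p-3 \<and> \<not> (b = p-3 \<and> lowcrit p w)" using valid_tl cp bw False by simp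
    define \<mu> where "\<mu> = word_val p w"
    have "metal p (length w - 1) \<le> \<mu>" using valid_range[OF p, of w] vt unfolding \<mu>_def by blast
    then have mu: "\<mu> \<ge> 1" using metal_pos[OF p, of "length w - 1"] by linarith
    have cw: "metal_code p \<mu> = w" using code_of_valid[OF p] vt \<mu>_def by simp
    have "b + cr p \<mu> < p - 2" using digit_cond[OF p mu, of b] vt cw by simp
    moreover have "n = S p \<mu> + b" using cp bw val_cons[of p b w] mu cw by (simp add: S_def)
    ultimately show ?thesis using mu bw cw by blast
  qed
qed



lemma rep_snoc: "x @ replicate (Suc k) (0::nat) = (x @ replicate k 0) @ [0]"
  by (simp add: replicate_append_same[symmetric])

lemma ok_pad: assumes p: "p \<ge> 5" and "ok p x" shows "ok p (x @ replicate k 0)"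
proof (induction k)
  case 0 then show ?case using assms by simp
next
  case (Suc k) then show ?case using p by (simp only: rep_snoc ok_snoc) simp
qed

lemma val_pad: "word_val p (x @ replicate k 0) = word_val p x"
proof (induction k)
  case 0 then show ?case by simp
next
  case (Suc k) then show ?case by (simp only: rep_snoc val_snoc)
qed

lemma block_lt: assumes p: "p \<ge> 5" and mu: "1 \<le> \<mu>" "\<mu> < \<nu>"
  and b: "b + cr p \<mu> < p - 2" and b': "b' + cr p \<nu> < p - 2"
  shows "S p \<mu> + b < S p \<nu> + b'"
proof -
  have nu: "1 \<le> \<nu>" using mu by simp
  define w where "w = metal_code p \<mu>"
  define w' where "w' = metal_code p \<nu>"
  have vw: "valid_code p w" "word_val p w = \<mu>" using code_props[OF p mu(1)] w_def by auto
  have vw': "valid_code p w'" "word_val p w' = \<nu>" using code_props[OF p nu] w'_def by auto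
  have l: "length w \<le> length w'"
  proof (rule ccontr)
    assume "\<not> length w \<le> length w'"
    then have "metal p (length w') \<le> metal p (length w - 1)" using metal_le[OF p] by simp
    then show False using valid_range[OF p vw(1)] valid_range[OF p vw'(1)] vw vw' mu by linarith
  qed
  define w0 where "w0 = w @ replicate (length w' - length w) 0"
  have vb: "valid_code p (b # w)" using valid_cons[OF vw(1)] digit_cond[OF p mu(1), of b] b w_def by simp
  have vb': "valid_code p (b' # w')" using valid_cons[OF vw'(1)] digit_cond[OF p nu, of b'] b' w'_def by simp
  have ok0: "ok p (b # w0)" using ok_pad[OF p valid_ok[OF vb]] unfolding w0_def by simp
  have "word_val p (b # w0) < word_val p (b' # w')"
    using lex[OF p ok0 valid_ok[OF vb']] l vw vw' mu val_pad[of p w] unfolding w0_def by simp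
  moreover have "word_val p (b # w0) = S p \<mu> + b"
    using val_pad[of p "b # w"] val_cons[of p b w] mu unfolding w0_def S_def w_def by simp
  moreover have "word_val p (b' # w') = S p \<nu> + b'"
    using val_cons[of p b' w'] nu unfolding S_def w'_def by simp
  ultimately show ?thesis by simp
qed

lemma S_mono: assumes p: "p \<ge> 5" and "\<mu> < \<nu>" shows "S p \<mu> < S p \<nu>"
proof (cases "\<mu> = 0")
  case True
  then show ?thesis using S_ge[OF p, of \<nu>] assms by (simp add: S_def)
next
  case False
  then show ?thesis using block_lt[OF p, of \<mu> \<nu> 0 0] assms cr_le[of p \<mu>] cr_le[of p \<nu>] by simp
qed

lemma S_1: assumes p: "p \<ge> 5" shows "S p 1 = p - 2"
proof -
  have "metal_code p 1 = [1]" using code_small[OF p] p by simp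
  then show ?thesis unfolding S_def word_val_def by simp
qed

lemma S_step: assumes p: "p \<ge> 5" and nu: "\<nu> \<ge> 1"
  shows "S p (Suc \<nu>) = S p \<nu> + (p - 2) - cr p \<nu>"
proof -
  define n0 where "n0 = S p \<nu> + (p - 2) - cr p \<nu>"
  have crl: "cr p \<nu> \<le> 1" by (rule cr_le)
  have Sg: "S p \<nu> \<ge> p - 2" using S_ge[OF p nu] .
  have "S p \<nu> + (p - 3 - cr p \<nu>) < S p (Suc \<nu>) + 0"
    using block_lt[OF p nu, of "Suc \<nu>" "p - 3 - cr p \<nu>" 0] crl cr_le[of p "Suc \<nu>"] p by simp
  then have up: "n0 \<le> S p (Suc \<nu>)" unfolding n0_def using crl p by simp
  have n0g: "n0 \<ge> p - 2" unfolding n0_def using Sg crl p by simp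
  have "S p (Suc \<nu>) \<le> n0"
  proof -
    have "1 \<le> n0" using n0g p by simp
    from decomp[OF p this] n0g obtain \<mu> b where mb: "\<mu> \<ge> 1" "b + cr p \<mu> < p - 2" "n0 = S p \<mu> + b"
      by auto
    consider "\<mu> < \<nu>" | "\<mu> = \<nu>" | "\<nu> < \<mu>" by linarith
    then show ?thesis
    proof cases
      case 1
      then have "S p \<mu> + b < S p \<nu> + 0" using block_lt[OF p mb(1) 1 mb(2), of 0] p crl by simp
      then show ?thesis using mb n0_def crl p by simp
    next
      case 2 then show ?thesis using mb n0_def p crl by simp
    next
      case 3 then have "S p (Suc \<nu>) \<le> S p \<mu>" using S_mono[OF p, of "Suc \<nu>" \<mu>] by (cases "Suc \<nu> = \<mu>") auto
      then show ?thesis using mb by simp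
    qed
  qed
  then show ?thesis using up n0_def by simp
qed

lemma S_unique: assumes p: "p \<ge> 5" and "S p t \<le> x" "x < S p (Suc t)" "S p t' \<le> x" "x < S p (Suc t')"
  shows "t = t'"
proof (rule ccontr)
  assume "t \<noteq> t'"
  then consider "Suc t \<le> t'" | "Suc t' \<le> t" by linarith
  then show False
  proof cases
    case 1 then have "S p (Suc t) \<le> S p t'" using S_mono[OF p, of "Suc t" t'] by (cases "Suc t = t'") auto
    then show False using assms by simp
  next
    case 2 then have "S p (Suc t') \<le> S p t" using S_mono[OF p, of "Suc t'" t] by (cases "Suc t' = t") auto
    then show False using assms by simp
  qed
qed

lemma T_range: assumes p: "p \<ge> 5" and n: "n \<ge> 1"
  shows "S p (T p n) \<le> n \<and> n < S p (Suc (T p n)) \<and> (cr p n = 1 \<longleftrightarrow> Suc n = S p (Suc (T p n)))"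
  using decomp[OF p n]
proof
  assume a: "n < p - 2 \<and> metal_code p n = [n]"
  then have T0: "T p n = 0" unfolding T_def by simp
  have "lowcrit p [n] \<longleftrightarrow> n = p - 3" unfolding lowcrit_def
    by (auto simp: Cons_eq_append_conv)
  then have "cr p n = 1 \<longleftrightarrow> n = p - 3" using a n unfolding cr_def by auto
  then show ?thesis using T0 a S_1[OF p] p by (auto simp: S_def)
next
  assume "\<exists>\<mu> b. \<mu> \<ge> 1 \<and> b + cr p \<mu> < p - 2 \<and> n = S p \<mu> + b \<and> metal_code p n = b # metal_code p \<mu>"
  then obtain \<mu> b where mb: "\<mu> \<ge> 1" "b + cr p \<mu> < p - 2" "n = S p \<mu> + b" "metal_code p n = b # metal_code p \<mu>"
    by blast
  have Tm: "T p n = \<mu>" using mb code_props[OF p mb(1)] unfolding T_def by simp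
  have st: "S p (Suc \<mu>) = S p \<mu> + (p - 2) - cr p \<mu>" using S_step[OF p mb(1)] .
  have "lowcrit p (b # metal_code p \<mu>) \<longleftrightarrow> b = p - 3 \<or> (b = p - 4 \<and> lowcrit p (metal_code p \<mu>))"
    using lowcrit_cons[OF p] .
  then have "cr p n = 1 \<longleftrightarrow> b + 1 + cr p \<mu> = p - 2" using mb p n unfolding cr_def
    by (auto split: if_splits)
  then show ?thesis using Tm mb st cr_le[of p \<mu>] by auto
qed

lemma T_step: assumes p: "p \<ge> 5" and n: "n \<ge> 1"
  shows "T p (Suc n) = T p n + cr p n"
proof -
  have r: "S p (T p n) \<le> n" "n < S p (Suc (T p n))" "cr p n = 1 \<longleftrightarrow> Suc n = S p (Suc (T p n))"
    using T_range[OF p n] by auto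
  have r': "S p (T p (Suc n)) \<le> Suc n" "Suc n < S p (Suc (T p (Suc n)))" using T_range[OF p, of "Suc n"] by auto
  show ?thesis
  proof (cases "cr p n = 1")
    case True
    then have "Suc n = S p (Suc (T p n))" using r by simp
    moreover have "Suc n < S p (Suc (Suc (T p n)))" using S_mono[OF p, of "Suc (T p n)" "Suc (Suc (T p n))"] calculation by simp
    ultimately have "T p (Suc n) = Suc (T p n)" using S_unique[OF p, of "T p (Suc n)" "Suc n" "Suc (T p n)"] r' by simp
    then show ?thesis using True by simp
  next
    case False
    then have c0: "cr p n = 0" using cr_le[of p n] by simp
    then have "Suc n < S p (Suc (T p n))" using r by auto
    then have "T p (Suc n) = T p n" using S_unique[OF p, of "T p (Suc n)" "Suc n" "T p n"] r r' by simp
    then show ?thesis using c0 by simp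
  qed
qed



abbreviation NN :: "nat \<Rightarrow> (nat \<Rightarrow> nat) \<Rightarrow> nat \<Rightarrow> nat" where "NN p \<alpha> k \<equiv> snd (build p \<alpha> k)"
abbreviation col :: "nat \<Rightarrow> (nat \<Rightarrow> nat) \<Rightarrow> nat \<Rightarrow> nat \<Rightarrow> bool" where "col p \<alpha> k \<equiv> fst (build p \<alpha> k)"

lemma build_Suc: "build p \<alpha> (Suc k) =
  ((\<lambda>x. if NN p \<alpha> k \<le> x \<and> x < NN p \<alpha> k + (if col p \<alpha> k (Suc k) then p - 2 else p - 3)
        then x - NN p \<alpha> k + 1 \<noteq> \<alpha> (Suc k) else col p \<alpha> k x),
   NN p \<alpha> k + (if col p \<alpha> k (Suc k) then p - 2 else p - 3))"
proof -
  obtain c nx where e: "build p \<alpha> k = (c, nx)" by (cases "build p \<alpha> k")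
  show ?thesis by (simp add: e Let_def)
qed

declare build.simps(2)[simp del]

lemma N_Suc0: "NN p \<alpha> (Suc k) = NN p \<alpha> k + (if col p \<alpha> k (Suc k) then p - 2 else p - 3)"
  by (simp add: build_Suc del: build.simps)

lemma col_Suc: "col p \<alpha> (Suc k) x = (if NN p \<alpha> k \<le> x \<and> x < NN p \<alpha> (Suc k)
        then x - NN p \<alpha> k + 1 \<noteq> \<alpha> (Suc k) else col p \<alpha> k x)"
  by (simp add: build_Suc del: build.simps)

lemma N_0: "NN p \<alpha> 0 = 2" by simp

lemma N_inc: assumes p: "p \<ge> 5" shows "NN p \<alpha> k + 2 \<le> NN p \<alpha> (Suc k)"
  unfolding N_Suc0 using p by (cases "col p \<alpha> k (Suc k)") auto

lemma N_mono: assumes p: "p \<ge> 5" and "i \<le> j" shows "NN p \<alpha> i \<le> NN p \<alpha> j"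
  using assms(2)
proof (induction j)
  case 0 then show ?case by simp
next
  case (Suc j) then show ?case using N_inc[OF p, of \<alpha> j] by (cases "i = Suc j") auto
qed

lemma N_smono: assumes p: "p \<ge> 5" and "i < j" shows "NN p \<alpha> i < NN p \<alpha> j"
  using N_mono[OF p, of "Suc i" j \<alpha>] N_inc[OF p, of \<alpha> i] assms by simp

lemma N_ge: assumes p: "p \<ge> 5" shows "k + 2 \<le> NN p \<alpha> k"
proof (induction k)
  case 0 then show ?case by simp
next
  case (Suc k) then show ?case using N_inc[OF p, of \<alpha> k] by simp
qed

lemma col_stable: assumes p: "p \<ge> 5" and "x < NN p \<alpha> k" shows "col p \<alpha> (k + j) x = col p \<alpha> k x"
proof (induction j)
  case 0 then show ?case by simp
next
  case (Suc j)
  have "NN p \<alpha> k \<le> NN p \<alpha> (k + j)" using N_mono[OF p] by simp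
  then show ?case using Suc assms(2) by (simp add: col_Suc)
qed

lemma white_Suc: assumes p: "p \<ge> 5" shows "white p \<alpha> (Suc k) = col p \<alpha> k (Suc k)"
  unfolding white_def using N_ge[OF p, of k \<alpha>] by (simp add: col_Suc)

lemma N_Suc: assumes p: "p \<ge> 5"
  shows "NN p \<alpha> (Suc k) = NN p \<alpha> k + (if white p \<alpha> (Suc k) then p - 2 else p - 3)"
  using N_Suc0 white_Suc[OF p] by (simp del: build.simps)

lemma white_block: assumes p: "p \<ge> 5" and x: "NN p \<alpha> k \<le> x" "x < NN p \<alpha> (Suc k)"
  shows "white p \<alpha> x = (x - NN p \<alpha> k + 1 \<noteq> \<alpha> (Suc k))"
proof -
  have "Suc k \<le> x" using N_ge[OF p, of k \<alpha>] x by simp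
  then have "col p \<alpha> x x = col p \<alpha> (Suc k + (x - Suc k)) x" by simp
  also have "\<dots> = col p \<alpha> (Suc k) x" using col_stable[OF p x(2)] by blast
  finally show ?thesis unfolding white_def using x by (simp add: col_Suc)
qed

lemma white_1: "white p \<alpha> 1 = True"
  unfolding white_def by (simp add: col_Suc)

lemma sons_card: "\<nu> \<ge> 1 \<Longrightarrow> card (sons p \<alpha> \<nu>) = NN p \<alpha> \<nu> - NN p \<alpha> (\<nu> - 1)"
  unfolding sons_def by simp

definition bl :: "nat \<Rightarrow> (nat \<Rightarrow> nat) \<Rightarrow> nat \<Rightarrow> nat" where
  "bl p \<alpha> x = (if white p \<alpha> x then 0 else 1)"
definition Bl :: "nat \<Rightarrow> (nat \<Rightarrow> nat) \<Rightarrow> nat \<Rightarrow> nat" where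
  "Bl p \<alpha> n = (\<Sum>x\<in>{1..n}. bl p \<alpha> x)"

lemma Bl_Suc: "Bl p \<alpha> (Suc n) = Bl p \<alpha> n + bl p \<alpha> (Suc n)"
  unfolding Bl_def by simp

lemma asg_bounds: assumes "assignment p \<alpha>"
  shows "1 \<le> \<alpha> (Suc k) \<and> \<alpha> (Suc k) \<le> NN p \<alpha> (Suc k) - NN p \<alpha> k"
proof -
  have "1 \<le> \<alpha> (Suc k) \<and> \<alpha> (Suc k) \<le> card (sons p \<alpha> (Suc k))" using assms[unfolded assignment_def, rule_format, of "Suc k"] by simp
  then show ?thesis using sons_card[of "Suc k" p \<alpha>] by simp
qed

lemma Bl_inner: assumes p: "p \<ge> 5" and asg: "assignment p \<alpha>" and h: "Bl p \<alpha> (NN p \<alpha> k - 1) = k"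
  shows "i < NN p \<alpha> (Suc k) - NN p \<alpha> k \<Longrightarrow> Bl p \<alpha> (NN p \<alpha> k + i) = k + (if \<alpha> (Suc k) \<le> i + 1 then 1 else 0)"
proof (induction i)
  case 0
  have N2: "NN p \<alpha> k \<ge> 2" using N_ge[OF p, of k \<alpha>] by simp
  then have e: "NN p \<alpha> k = Suc (NN p \<alpha> k - 1)" by simp
  have w: "white p \<alpha> (NN p \<alpha> k) = (1 \<noteq> \<alpha> (Suc k))" using white_block[OF p, of \<alpha> k "NN p \<alpha> k"] 0 by simp
  have "Bl p \<alpha> (NN p \<alpha> k) = Bl p \<alpha> (NN p \<alpha> k - 1) + bl p \<alpha> (NN p \<alpha> k)"
    using Bl_Suc[of p \<alpha> "NN p \<alpha> k - 1"] e by simp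
  then show ?case using h w asg_bounds[OF asg, of k] by (simp add: bl_def)
next
  case (Suc i)
  have w: "white p \<alpha> (NN p \<alpha> k + Suc i) = (Suc i + 1 \<noteq> \<alpha> (Suc k))"
    using white_block[OF p, of \<alpha> k "NN p \<alpha> k + Suc i"] Suc.prems by simp
  have "Bl p \<alpha> (NN p \<alpha> k + Suc i) = Bl p \<alpha> (NN p \<alpha> k + i) + bl p \<alpha> (NN p \<alpha> k + Suc i)"
    using Bl_Suc[of p \<alpha> "NN p \<alpha> k + i"] by simp
  then show ?case using Suc w by (simp add: bl_def)
qed

lemma Bl_blocks: assumes p: "p \<ge> 5" and asg: "assignment p \<alpha>"
  shows "Bl p \<alpha> (NN p \<alpha> k - 1) = k"
proof (induction k)
  case 0
  show ?case using white_1 by (simp add: Bl_def bl_def)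
next
  case (Suc k)
  define D where "D = NN p \<alpha> (Suc k) - NN p \<alpha> k"
  have D: "D \<ge> 1" "\<alpha> (Suc k) \<le> D" using asg_bounds[OF asg, of k] unfolding D_def by auto
  have "Bl p \<alpha> (NN p \<alpha> k + (D - 1)) = k + 1"
    using Bl_inner[OF p asg Suc, of "D - 1"] D unfolding D_def by simp
  moreover have "NN p \<alpha> k + (D - 1) = NN p \<alpha> (Suc k) - 1" using D N_inc[OF p, of \<alpha> k] unfolding D_def by simp
  ultimately show ?case by simp
qed



definition Cr :: "nat \<Rightarrow> nat \<Rightarrow> nat" where
  "Cr p n = (\<Sum>x\<in>{1..n}. cr p x)"

lemma Cr_Suc: "Cr p (Suc n) = Cr p n + cr p (Suc n)" unfolding Cr_def by simp

lemma T_1: assumes p: "p \<ge> 5" shows "T p 1 = 0"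
  using code_small[OF p, of 1] p unfolding T_def by simp

lemma Cr_T: assumes p: "p \<ge> 5" shows "n \<ge> 1 \<Longrightarrow> Cr p n = T p n + cr p n"
proof (induction n)
  case 0 then show ?case by simp
next
  case (Suc n)
  show ?case
  proof (cases "n = 0")
    case True then show ?thesis using T_1[OF p] by (simp add: Cr_def)
  next
    case False
    then show ?thesis using Suc T_step[OF p, of n] by (simp add: Cr_Suc)
  qed
qed

lemma E_formula: assumes p: "p \<ge> 5"
  shows "NN p \<alpha> \<nu> + (p - 2) + Bl p \<alpha> \<nu> = 2 + S p (Suc \<nu>) + Cr p \<nu>"
proof (induction \<nu>)
  case 0 then show ?case using S_1[OF p] by (simp add: Bl_def Cr_def)
next
  case (Suc \<nu>)
  have n: "NN p \<alpha> (Suc \<nu>) + bl p \<alpha> (Suc \<nu>) = NN p \<alpha> \<nu> + (p - 2)"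
    using N_Suc[OF p, of \<alpha> \<nu>] p by (cases "white p \<alpha> (Suc \<nu>)") (simp_all add: bl_def)
  have s: "S p (Suc (Suc \<nu>)) + cr p (Suc \<nu>) = S p (Suc \<nu>) + (p - 2)"
    using S_step[OF p, of "Suc \<nu>"] cr_le[of p "Suc \<nu>"] p by simp
  show ?case using Suc n s Bl_Suc[of p \<alpha> \<nu>] Cr_Suc[of p \<nu>] by simp
qed

lemma block_exists: assumes p: "p \<ge> 5" shows "2 \<le> \<nu> \<Longrightarrow> \<exists>k. NN p \<alpha> k \<le> \<nu> \<and> \<nu> < NN p \<alpha> (Suc k)"
proof (induction \<nu>)
  case 0 then show ?case by simp
next
  case (Suc \<nu>)
  show ?case
  proof (cases "\<nu> = 1")
    case True then show ?thesis using N_inc[OF p, of \<alpha> 0] by (intro exI[of _ 0]) simp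
  next
    case False
    then obtain k where k: "NN p \<alpha> k \<le> \<nu>" "\<nu> < NN p \<alpha> (Suc k)" using Suc by auto
    show ?thesis
    proof (cases "Suc \<nu> < NN p \<alpha> (Suc k)")
      case True then show ?thesis using k by (intro exI[of _ k]) simp
    next
      case False then show ?thesis using k N_inc[OF p, of \<alpha> "Suc k"] by (intro exI[of _ "Suc k"]) simp
    qed
  qed
qed

lemma S_le: assumes p: "p \<ge> 5" and "i \<le> j" shows "S p i \<le> S p j"
  using S_mono[OF p, of i j] assms(2) by (cases "i = j") auto

lemma S_0: "S p 0 = 0" by (simp add: S_def)

lemma main_H: assumes p: "p \<ge> 5" and asg: "assignment p \<alpha>"
  shows "S p \<nu> < NN p \<alpha> \<nu> \<and> NN p \<alpha> \<nu> \<le> S p (Suc \<nu>)"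
proof (induction \<nu> rule: less_induct)
  case (less \<nu>)
  consider "\<nu> = 0" | "\<nu> = 1" | "\<nu> \<ge> 2" by linarith
  then show ?case
  proof cases
    case 1 then show ?thesis using S_1[OF p] p by (simp add: S_0)
  next
    case 2
    have "NN p \<alpha> 1 = 2 + (p - 2)" using N_Suc[OF p, of \<alpha> 0] white_1 by simp
    moreover have "Bl p \<alpha> 1 = 0" using white_1 by (simp add: Bl_def bl_def)
    moreover have "Cr p 1 \<le> 1" using Cr_T[OF p, of 1] T_1[OF p] cr_le[of p 1] by simp
    moreover note E_formula[OF p, of \<alpha> 1]
    ultimately show ?thesis using 2 S_1[OF p] p by simp
  next
    case 3
    obtain k where k: "NN p \<alpha> k \<le> \<nu>" "\<nu> < NN p \<alpha> (Suc k)" using block_exists[OF p 3] by blast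
    have kl: "Suc k < \<nu>" using N_ge[OF p, of k \<alpha>] k by simp
    have IHk: "S p k < NN p \<alpha> k" using less.IH[of k] kl by simp
    have IHk1: "NN p \<alpha> (Suc k) \<le> S p (Suc (Suc k))" using less.IH[of "Suc k"] kl by simp
    define i where "i = \<nu> - NN p \<alpha> k"
    have nui: "\<nu> = NN p \<alpha> k + i" using k i_def by simp
    have bk: "Bl p \<alpha> (NN p \<alpha> k - 1) = k" using Bl_blocks[OF p asg] .
    define \<beta> where "\<beta> = (if \<alpha> (Suc k) \<le> i + 1 then 1 else 0 :: nat)"
    have Bnu: "Bl p \<alpha> \<nu> = k + \<beta>" using Bl_inner[OF p asg bk, of i] k nui unfolding \<beta>_def by simp
    have \<beta>1: "\<beta> \<le> 1" unfolding \<beta>_def by simp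
    define \<tau> where "\<tau> = T p \<nu>"
    define c where "c = cr p \<nu>"
    have nu1: "\<nu> \<ge> 1" using 3 by simp
    have tr: "S p \<tau> \<le> \<nu>" "\<nu> < S p (Suc \<tau>)" "c = 1 \<longleftrightarrow> Suc \<nu> = S p (Suc \<tau>)"
      using T_range[OF p nu1] unfolding \<tau>_def c_def by auto
    have c1: "c \<le> 1" using cr_le c_def by simp
    have crnu: "Cr p \<nu> = \<tau> + c" using Cr_T[OF p nu1] \<tau>_def c_def by simp
    have Sst: "S p (Suc \<nu>) + c = S p \<nu> + (p - 2)" using S_step[OF p nu1] c1 p c_def by simp
    have E: "NN p \<alpha> \<nu> + (p - 2) + (k + \<beta>) = 2 + S p (Suc \<nu>) + (\<tau> + c)"
      using E_formula[OF p, of \<alpha> \<nu>] Bnu crnu by simp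
    have t1: "k \<le> \<tau>"
    proof (rule ccontr)
      assume "\<not> k \<le> \<tau>"
      then have "S p (Suc \<tau>) \<le> S p k" using S_le[OF p] by simp
      then show False using tr IHk k by simp
    qed
    have t2: "\<tau> \<le> Suc k"
    proof (rule ccontr)
      assume "\<not> \<tau> \<le> Suc k"
      then have "S p (Suc (Suc k)) \<le> S p \<tau>" using S_le[OF p] by simp
      then show False using tr IHk1 k by simp
    qed
    have bad: "\<beta> = 1" if "\<tau> = Suc k" "c = 1"
    proof -
      have "Suc \<nu> = S p (Suc (Suc k))" using tr that by simp
      then have "NN p \<alpha> (Suc k) = Suc \<nu>" using IHk1 k by simp
      then have "\<alpha> (Suc k) \<le> i + 1" using asg_bounds[OF asg, of k] nui by simp
      then show ?thesis unfolding \<beta>_def by simp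
    qed
    have g1: "S p \<nu> < NN p \<alpha> \<nu>" using E Sst t1 \<beta>1 by linarith
    have g2: "NN p \<alpha> \<nu> \<le> S p (Suc \<nu>)"
    proof (cases "\<tau> = Suc k \<and> c = 1")
      case True then show ?thesis using E bad p by simp
    next
      case False then have "\<tau> + c \<le> Suc k" using t2 c1 by auto
      then show ?thesis using E p by linarith
    qed
    show ?thesis using g1 g2 by simp
  qed
qed



lemma pref: assumes p: "p \<ge> 5" and s: "s \<ge> 1" and h: "hd (metal_code p s) = 0"
  shows "\<exists>\<mu>\<ge>1. s = S p \<mu> \<and> metal_code p s = 0 # metal_code p \<mu>"
  using decomp[OF p s] h s by auto

lemma S_code: assumes p: "p \<ge> 5" and mu: "\<mu> \<ge> 1"
  shows "metal_code p (S p \<mu>) = 0 # metal_code p \<mu>"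
  using block_code[OF p mu, of 0] cr_le[of p \<mu>] p by simp

lemma S_in_sons: assumes p: "p \<ge> 5" and asg: "assignment p \<alpha>" and nu: "\<nu> \<ge> 1"
  shows "S p \<nu> \<in> sons p \<alpha> \<nu>"
  using main_H[OF p asg, of \<nu>] main_H[OF p asg, of "\<nu> - 1"] nu unfolding sons_def by simp

lemma sons_disj: assumes p: "p \<ge> 5" and "x \<in> sons p \<alpha> \<mu>" "x \<in> sons p \<alpha> \<nu>" "\<mu> \<ge> 1" "\<nu> \<ge> 1"
  shows "\<mu> = \<nu>"
proof (rule ccontr)
  assume "\<mu> \<noteq> \<nu>"
  then consider "\<mu> < \<nu>" | "\<nu> < \<mu>" by linarith
  then show False
  proof cases
    case 1 then have "NN p \<alpha> \<mu> \<le> NN p \<alpha> (\<nu> - 1)" using N_mono[OF p] by simp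
    then show False using assms unfolding sons_def by simp
  next
    case 2 then have "NN p \<alpha> \<nu> \<le> NN p \<alpha> (\<mu> - 1)" using N_mono[OF p] by simp
    then show False using assms unfolding sons_def by simp
  qed
qed

lemma metal_code_metal: assumes p: "p \<ge> 5"
  shows "metal_code p (metal p n) = replicate n 0 @ [1]"
proof -
  have nf: "\<not> has_forbidden p (replicate n 0 @ [1])"
  proof
    assume "has_forbidden p (replicate n 0 @ [1])"
    then obtain u j v where e: "replicate n 0 @ [1] = u @ [p - 3] @ replicate j (p - 4) @ [p - 3] @ v"
      unfolding has_forbidden_def by blast
    have "p - 3 \<in> set (u @ [p - 3] @ replicate j (p - 4) @ [p - 3] @ v)" by simp
    then have "p - 3 \<in> set (replicate n (0::nat) @ [1])" using e by metis
    then show False using p by (auto split: if_splits)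
  qed
  have "valid_code p (replicate n 0 @ [1])"
    unfolding valid_code_def using nf p by auto
  moreover have "word_val p (replicate n 0 @ [1]) = metal p n"
    using val_snoc[of p "replicate n 0" 1] val_pad[of p "[]" n] by simp
  ultimately show ?thesis using code_of_valid[OF p] by metis
qed

lemma S_metal: assumes p: "p \<ge> 5" shows "S p (metal p n) = metal p (Suc n)"
proof -
  have "metal p n \<noteq> 0" using metal_pos[OF p] by (metis not_less0)
  then have "S p (metal p n) = word_val p (replicate (Suc n) 0 @ [1])"
    unfolding S_def using metal_code_metal[OF p] by simp
  also have "\<dots> = metal p (Suc n)"
    using val_snoc[of p "replicate (Suc n) 0" 1] val_pad[of p "[]" "Suc n"] by simp
  finally show ?thesis .
qed

theorem theorem7:
  fixes p :: nat and \<alpha> :: "nat \<Rightarrow> nat"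
  assumes "p \<ge> 5" and "assignment p \<alpha>"
  shows "(\<forall>\<nu>\<ge>1. (\<exists>!s. s \<in> sons p \<alpha> \<nu> \<and> hd (metal_code p s) = 0)
              \<and> (\<forall>s\<in>sons p \<alpha> \<nu>. hd (metal_code p s) = 0 \<longrightarrow> metal_code p s = 0 # metal_code p \<nu>))
         \<and> (\<forall>n. metal p (Suc n) \<in> sons p \<alpha> (metal p n) \<and> hd (metal_code p (metal p (Suc n))) = 0)"
proof -
  note p = assms(1) and asg = assms(2)
  have uniq: "s = S p \<nu>" if hyp: "\<nu> \<ge> 1" "s \<in> sons p \<alpha> \<nu>" "hd (metal_code p s) = 0" for \<nu> s
  proof -
    have "s \<ge> 2" using hyp(2) unfolding sons_def using N_ge[OF p, of "\<nu> - 1" \<alpha>] by simp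
    then obtain \<mu> where mu: "\<mu> \<ge> 1" "s = S p \<mu>" using pref[OF p _ hyp(3)] by auto
    have "s \<in> sons p \<alpha> \<mu>" using S_in_sons[OF p asg mu(1)] mu by simp
    then have "\<mu> = \<nu>" using sons_disj[OF p _ hyp(2)] mu hyp(1) by blast
    then show ?thesis using mu by simp
  qed
  have A: "(\<exists>!s. s \<in> sons p \<alpha> \<nu> \<and> hd (metal_code p s) = 0)
              \<and> (\<forall>s\<in>sons p \<alpha> \<nu>. hd (metal_code p s) = 0 \<longrightarrow> metal_code p s = 0 # metal_code p \<nu>)"
    if nu: "\<nu> \<ge> 1" for \<nu>
  proof -
    have "S p \<nu> \<in> sons p \<alpha> \<nu> \<and> hd (metal_code p (S p \<nu>)) = 0"
      using S_in_sons[OF p asg nu] S_code[OF p nu] by simp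
    then have "\<exists>!s. s \<in> sons p \<alpha> \<nu> \<and> hd (metal_code p s) = 0" using uniq[OF nu] by blast
    moreover have "\<forall>s\<in>sons p \<alpha> \<nu>. hd (metal_code p s) = 0 \<longrightarrow> metal_code p s = 0 # metal_code p \<nu>"
      using uniq[OF nu] S_code[OF p nu] by blast
    ultimately show ?thesis by blast
  qed
  have B: "metal p (Suc n) \<in> sons p \<alpha> (metal p n) \<and> hd (metal_code p (metal p (Suc n))) = 0" for n
  proof -
    have m1: "metal p n \<ge> 1" using metal_pos[OF p, of n] by simp
    show ?thesis using S_in_sons[OF p asg m1] S_code[OF p m1] S_metal[OF p, of n] by simp
  qed
  show ?thesis using A B by blast
qed

end
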